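(* In every run of the algorithm described in the context in which at most $t$ processes crash, for all correct processes $p_i,p_j$: if $w\_sync_i[i]=x$ at some time, then there is a finite time after which $w\_sync_i[j]\ge x$.
   Context: Model. There are $n$ asynchronous processes $p_1,\dots,p_n$, of which up to $t<n/2$ may crash; a process runs its algorithm correctly until it crashes, and a process that never crashes is correct. Each ordered pair of processes is linked by a reliable (no loss, corruption, duplication or creation; every message sent to a correct process is eventually received), asynchronous, not necessarily FIFO channel. $p_w$ is the single writer, invoking writes sequentially; $v_0$ is the initial value. Messages: $\textsc{write}(b,v)$ with $b\in\{0,1\}$, which stands for the two types $\textsc{write0}(v)$ and $\textsc{write1}(v)$; $\textsc{read}()$; $\textsc{proceed}()$. Variables of $p_i$. These are: $history_i$ with $history_i[0]=v_0$; $w\_sync_i[1..n]$, initially all $0$; $r\_sync_i[1..n]$, initially all $0$. $\mathsf{write}(v)$ by $p_w$: $wsn\gets w\_sync_w[w]+1$; $w\_sync_w[w]\gets wsn$; $history_w[wsn]\gets v$. Send $\textsc{write}(wsn\bmod 2,v)$ to each $p_j$ with $w\_sync_w[j]=wsn-1$. Wait until at least $n-t$ indices $j$ have $w\_sync_w[j]=wsn$. Return. $\mathsf{read}()$ by $p_i$: $r\_sync_i[i]\gets r\_sync_i[i]+1$ and call the new value $rsn$. Send $\textsc{read}()$ to all $p_j$ with $j\ne i$. Wait until at least $n-t$ indices $j$ have $r\_sync_i[j]=rsn$. Let $sn\gets w\_sync_i[i]$. Wait until at least $n-t$ indices $j$ have $w\_sync_i[j]\ge sn$. Return $history_i[sn]$.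 On receipt of $\textsc{write}(b,v)$ from $p_j$ at $p_i$: Wait until $b=(w\_sync_i[j]+1)\bmod 2$. Let $wsn\gets w\_sync_i[j]+1$. If $wsn=w\_sync_i[i]+1$, then set $w\_sync_i[i]\gets wsn$ and $history_i[wsn]\gets v$, and send $\textsc{write}(wsn\bmod 2,v)$ to each $p_\ell$ with $w\_sync_i[\ell]=wsn-1$. Else, if $wsn<w\_sync_i[i]$, send $\textsc{write}((wsn+1)\bmod 2,history_i[wsn+1])$ to $p_j$. Finally set $w\_sync_i[j]\gets wsn$. On receipt of $\textsc{read}()$ from $p_j$ at $p_i$: Let $sn\gets w\_sync_i[i]$; wait until $w\_sync_i[j]\ge sn$; send $\textsc{proceed}()$ to $p_j$. On receipt of $\textsc{proceed}()$ from $p_j$ at $p_i$: $r\_sync_i[j]\gets r\_sync_i[j]+1$. Message handlers run concurrently; a waiting handler does not block the reception of other messages. *)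

theory Defs
  imports Main
begin

datatype 'v msg = MWrite nat 'v | MRead | MProceed
  \<comment> \<open>MWrite b v stands for WRITE(b,v); b is always 0 or 1\<close>

datatype 'v task = TWrite nat 'v | TRead nat
  \<comment> \<open>waiting handlers: WRITE(b,v) handler; READ handler with the captured sn\<close>

datatype opstate = Idle | WWait nat | RWait1 nat | RWait2 nat

record 'v lstate =
  hist :: "nat \<Rightarrow> 'v"
  ws :: "nat \<Rightarrow> nat"
  rs :: "nat \<Rightarrow> nat"
  opst :: opstate
  pend :: "(nat \<times> nat \<times> 'v task) set"   \<comment> \<open>(message id, sender, task)\<close>
  crashed :: bool

text \<open>Messages in transit: (send time, sender, destination, message).\<close>
type_synonym 'v netmsg = "nat \<times> nat \<times> nat \<times> 'v msg"

record 'v cfg =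
  lst :: "nat \<Rightarrow> 'v lstate"
  net :: "'v netmsg set"

datatype 'v act =
    AInvW 'v
  | AInvR
  | ARd2                  \<comment> \<open>read: end of first wait, sn := w_sync[i]\<close>
  | ARetW
  | ARetR
  | ARecv nat nat "'v msg" \<comment> \<open>receipt of message (id, sender, msg)\<close>
  | AExec nat nat "'v task" \<comment> \<open>a waiting handler (id, sender, task) completes\<close>

datatype 'v event =
    Do nat "'v act"
  | Crash nat
  | CrashDo nat "'v act" "(nat \<times> 'v msg) set"
      \<comment> \<open>process performs the action but crashes while sending: only the given subset is sent\<close>
  | Stutter

definition init_lstate :: "'v \<Rightarrow> 'v lstate" where
  "init_lstate v0 = \<lparr>hist = (\<lambda>_. v0), ws = (\<lambda>_. 0), rs = (\<lambda>_. 0), opst = Idle,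
                     pend = {}, crashed = False\<rparr>"

definition init_cfg :: "'v \<Rightarrow> 'v cfg" where
  "init_cfg v0 = \<lparr>lst = (\<lambda>_. init_lstate v0), net = {}\<rparr>"

text \<open>Atomic execution of the WRITE(b,v) handler of p_i for a message from p_j,
  after its wait condition holds (s0 is the state with the task already removed).\<close>
definition write_exec :: "nat \<Rightarrow> nat \<Rightarrow> nat \<Rightarrow> 'v \<Rightarrow> 'v lstate \<Rightarrow> 'v lstate \<times> (nat \<times> 'v msg) set" where
  "write_exec n i j v s0 =
     (let wsn = ws s0 j + 1 in
      if wsn = ws s0 i + 1 then
        (let s1 = s0\<lparr>ws := (ws s0)(i := wsn), hist := (hist s0)(wsn := v)\<rparr> in
         (s1\<lparr>ws := (ws s1)(j := wsn)\<rparr>,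
          {(l, MWrite (wsn mod 2) v) | l. l \<in> {1..n} \<and> ws s1 l = wsn - 1}))
      else if wsn < ws s0 i then
        (s0\<lparr>ws := (ws s0)(j := wsn)\<rparr>, {(j, MWrite ((wsn + 1) mod 2) (hist s0 (wsn + 1)))})
      else (s0\<lparr>ws := (ws s0)(j := wsn)\<rparr>, {}))"

text \<open>Local effect of an action of process i: new local state and messages to send
  (destination, message); None if the action is not enabled.\<close>
fun lact :: "nat \<Rightarrow> nat \<Rightarrow> nat \<Rightarrow> nat \<Rightarrow> 'v act \<Rightarrow> 'v lstate
             \<Rightarrow> ('v lstate \<times> (nat \<times> 'v msg) set) option" where
  "lact n t w i (AInvW v) s =
     (if i = w \<and> opst s = Idle then
        (let wsn = ws s i + 1;
             s1 = s\<lparr>ws := (ws s)(i := wsn), hist := (hist s)(wsn := v)\<rparr> in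
         Some (s1\<lparr>opst := WWait wsn\<rparr>,
               {(j, MWrite (wsn mod 2) v) | j. j \<in> {1..n} \<and> ws s1 j = wsn - 1}))
      else None)"
| "lact n t w i AInvR s =
     (if opst s = Idle then
        (let rsn = rs s i + 1 in
         Some (s\<lparr>rs := (rs s)(i := rsn), opst := RWait1 rsn\<rparr>,
               {(j, MRead) | j. j \<in> {1..n} \<and> j \<noteq> i}))
      else None)"
| "lact n t w i ARd2 s =
     (case opst s of
        RWait1 rsn \<Rightarrow> (if card {j \<in> {1..n}. rs s j = rsn} \<ge> n - t
                       then Some (s\<lparr>opst := RWait2 (ws s i)\<rparr>, {}) else None)
      | _ \<Rightarrow> None)"
| "lact n t w i ARetW s =
     (case opst s of
        WWait wsn \<Rightarrow> (if card {j \<in> {1..n}. ws s j = wsn} \<ge> n - t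
                      then Some (s\<lparr>opst := Idle\<rparr>, {}) else None)
      | _ \<Rightarrow> None)"
| "lact n t w i ARetR s =
     (case opst s of
        RWait2 sn \<Rightarrow> (if card {j \<in> {1..n}. ws s j \<ge> sn} \<ge> n - t
                      then Some (s\<lparr>opst := Idle\<rparr>, {}) else None)
      | _ \<Rightarrow> None)"
| "lact n t w i (ARecv k j m) s =
     (case m of
        MWrite b v \<Rightarrow> Some (s\<lparr>pend := insert (k, j, TWrite b v) (pend s)\<rparr>, {})
      | MRead \<Rightarrow> Some (s\<lparr>pend := insert (k, j, TRead (ws s i)) (pend s)\<rparr>, {})
      | MProceed \<Rightarrow> Some (s\<lparr>rs := (rs s)(j := rs s j + 1)\<rparr>, {}))"
| "lact n t w i (AExec k j tk) s =
     (if (k, j, tk) \<in> pend s then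
        (let s0 = s\<lparr>pend := pend s - {(k, j, tk)}\<rparr> in
         case tk of
           TWrite b v \<Rightarrow> (if b = (ws s j + 1) mod 2 then Some (write_exec n i j v s0) else None)
         | TRead sn \<Rightarrow> (if ws s j \<ge> sn then Some (s0, {(j, MProceed)}) else None))
      else None)"

definition recv_ok :: "'v cfg \<Rightarrow> nat \<Rightarrow> 'v act \<Rightarrow> bool" where
  "recv_ok c i a = (case a of ARecv k j m \<Rightarrow> (k, j, i, m) \<in> net c | _ \<Rightarrow> True)"

definition consumed :: "nat \<Rightarrow> 'v act \<Rightarrow> 'v netmsg set" where
  "consumed i a = (case a of ARecv k j m \<Rightarrow> {(k, j, i, m)} | _ \<Rightarrow> {})"

definition is_inv :: "'v act \<Rightarrow> bool" where
  "is_inv a = (case a of AInvW _ \<Rightarrow> True | AInvR \<Rightarrow> True | _ \<Rightarrow> False)"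

definition enabled :: "nat \<Rightarrow> nat \<Rightarrow> nat \<Rightarrow> 'v cfg \<Rightarrow> nat \<Rightarrow> 'v act \<Rightarrow> bool" where
  "enabled n t w c i a = (i \<in> {1..n} \<and> \<not> crashed (lst c i) \<and> recv_ok c i a
                          \<and> lact n t w i a (lst c i) \<noteq> None)"

text \<open>One step at time k (message ids are the send time k).\<close>
definition step :: "nat \<Rightarrow> nat \<Rightarrow> nat \<Rightarrow> nat \<Rightarrow> 'v cfg \<Rightarrow> 'v event \<Rightarrow> 'v cfg \<Rightarrow> bool" where
  "step n t w k c e c' =
     (case e of
        Stutter \<Rightarrow> c' = c
      | Do i a \<Rightarrow> enabled n t w c i a \<and>
          (\<exists>s' outs. lact n t w i a (lst c i) = Some (s', outs) \<and>
             c' = \<lparr>lst = (lst c)(i := s'),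
                   net = (net c - consumed i a) \<union> {(k, i, d, m) | d m. (d, m) \<in> outs}\<rparr>)
      | Crash i \<Rightarrow> i \<in> {1..n} \<and> \<not> crashed (lst c i) \<and>
          c' = c\<lparr>lst := (lst c)(i := (lst c i)\<lparr>crashed := True\<rparr>)\<rparr>
      | CrashDo i a S \<Rightarrow> enabled n t w c i a \<and>
          (\<exists>s' outs. lact n t w i a (lst c i) = Some (s', outs) \<and> S \<subseteq> outs \<and>
             c' = \<lparr>lst = (lst c)(i := s'\<lparr>crashed := True\<rparr>),
                   net = (net c - consumed i a) \<union> {(k, i, d, m) | d m. (d, m) \<in> S}\<rparr>))"

text \<open>Weak fairness for every locally controlled action (everything except invocations):
  an action cannot stay enabled forever. For receipt actions this is exactly the
  reliability of channels towards non-crashed processes.\<close>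
definition fair :: "nat \<Rightarrow> nat \<Rightarrow> nat \<Rightarrow> (nat \<Rightarrow> 'v cfg) \<Rightarrow> bool" where
  "fair n t w r = (\<forall>i a k0. \<not> is_inv a \<longrightarrow> \<not> (\<forall>k\<ge>k0. enabled n t w (r k) i a))"

definition is_run :: "nat \<Rightarrow> nat \<Rightarrow> nat \<Rightarrow> 'v \<Rightarrow> (nat \<Rightarrow> 'v cfg) \<Rightarrow> (nat \<Rightarrow> 'v event) \<Rightarrow> bool" where
  "is_run n t w v0 r ev = (r 0 = init_cfg v0 \<and> (\<forall>k. step n t w k (r k) (ev k) (r (Suc k)))
                            \<and> fair n t w r)"

definition correct :: "(nat \<Rightarrow> 'v cfg) \<Rightarrow> nat \<Rightarrow> bool" where
  "correct r i = (\<forall>k. \<not> crashed (lst (r k) i))"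

end

theory Submission
  imports Defs
begin



lemma we_ws: "ws (fst (write_exec n i j v s0)) =
  (if ws s0 j = ws s0 i then (ws s0)(i := ws s0 j + 1, j := ws s0 j + 1) else (ws s0)(j := ws s0 j + 1))"
  by (simp add: write_exec_def Let_def)

lemma we_pend: "pend (fst (write_exec n i j v s0)) = pend s0"
  by (simp add: write_exec_def Let_def)

lemma we_crashed: "crashed (fst (write_exec n i j v s0)) = crashed s0"
  by (simp add: write_exec_def Let_def)

lemma we_out: "snd (write_exec n i j v s0) =
  (if ws s0 j = ws s0 i then {(l, MWrite ((ws s0 j + 1) mod 2) v) | l. l \<in> {1..n} \<and> ((ws s0)(i := ws s0 j + 1)) l = ws s0 j}
   else if ws s0 j + 1 < ws s0 i then {(j, MWrite ((ws s0 j + 2) mod 2) (hist s0 (ws s0 j + 2)))}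
   else {})"
  by (simp add: write_exec_def Let_def)




lemma lact_W:
  assumes "lact n t w p (AExec k j (TWrite b v)) st = Some (st', outs)"
  shows "(k,j,TWrite b v) \<in> pend st \<and> b = (ws st j + 1) mod 2 \<and>
         st' = fst (write_exec n p j v (st\<lparr>pend := pend st - {(k,j,TWrite b v)}\<rparr>)) \<and>
         outs = snd (write_exec n p j v (st\<lparr>pend := pend st - {(k,j,TWrite b v)}\<rparr>))"
  using assms by (auto simp: Let_def split: if_splits)

lemma lact_R:
  assumes "lact n t w p (AExec k j (TRead sn)) st = Some (st', outs)"
  shows "(k,j,TRead sn) \<in> pend st \<and> st' = st\<lparr>pend := pend st - {(k,j,TRead sn)}\<rparr> \<and> outs = {(j, MProceed)}"
  using assms by (auto simp: Let_def split: if_splits)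

lemma L_pres:
  assumes "lact n t w p a st = Some (st', outs)" "\<forall>q. ws st q \<le> ws st p"
  shows "\<forall>q. ws st' q \<le> ws st' p"
proof (cases a)
  case (AInvW x1)
  then show ?thesis using assms by (auto simp: Let_def le_Suc_eq split: if_splits)
next
  case AInvR
  then show ?thesis using assms by (auto simp: Let_def split: if_splits)
next
  case ARd2
  then show ?thesis using assms by (auto simp: Let_def split: if_splits opstate.splits)
next
  case ARetW
  then show ?thesis using assms by (auto simp: Let_def split: if_splits opstate.splits)
next
  case ARetR
  then show ?thesis using assms by (auto simp: Let_def split: if_splits opstate.splits)
next
  case (ARecv x61 x62 x63)
  then show ?thesis using assms by (auto simp: Let_def split: if_splits msg.splits)
next
  case (AExec k j tk)
  show ?thesis
  proof (cases tk)
    case (TWrite b v)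
    then show ?thesis using lact_W[of n t w p k j b v st st' outs] assms AExec
      by (auto simp: we_ws le_Suc_eq) (metis assms(2) Suc_leI le_neq_implies_less)+
  next
    case (TRead sn)
    then show ?thesis using lact_R[of n t w p k j sn st st' outs] assms AExec
      by auto
  qed
qed

lemma mono_pres:
  assumes "lact n t w p a st = Some (st', outs)" "\<forall>q. ws st q \<le> ws st p"
  shows "ws st q \<le> ws st' q"
proof (cases a)
  case (AExec k j tk)
  show ?thesis
  proof (cases tk)
    case (TWrite b v)
    then show ?thesis using lact_W[of n t w p k j b v st st' outs] assms AExec
      by (auto simp: we_ws le_Suc_eq)
  next
    case (TRead sn)
    then show ?thesis using lact_R[of n t w p k j sn st st' outs] assms AExec
      by auto
  qed
qed (use assms in \<open>auto simp: Let_def split: if_splits opstate.splits msg.splits\<close>)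




definition PIo :: "'v lstate \<Rightarrow> nat \<Rightarrow> (nat \<times> nat \<times> 'v) set" where
  "PIo st s = {(k,b,v). (k,s,TWrite b v) \<in> pend st}"

definition outW :: "(nat \<times> 'v msg) set \<Rightarrow> nat \<Rightarrow> (nat \<times> 'v) set" where
  "outW outs d = {(b,v). (d, MWrite b v) \<in> outs}"

definition sentv :: "'v lstate \<Rightarrow> nat \<Rightarrow> nat \<Rightarrow> nat" where
  "sentv st p d = min (ws st p) (ws st d + 1)"

lemma dst_eff:
  assumes "lact n t w p a st = Some (st', outs)" "s \<noteq> p"
  shows "(ws st' s = ws st s \<and> PIo st' s = PIo st s \<and> (\<forall>k b v. a \<noteq> ARecv k s (MWrite b v))) \<or>
   (\<exists>k b v. a = ARecv k s (MWrite b v) \<and> ws st' s = ws st s \<and> PIo st' s = insert (k,b,v) (PIo st s)) \<or>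
   (\<exists>k b v. a = AExec k s (TWrite b v) \<and> (k,b,v) \<in> PIo st s \<and> b = (ws st s + 1) mod 2
      \<and> ws st' s = ws st s + 1 \<and> PIo st' s = PIo st s - {(k,b,v)})"
proof (cases a)
  case (AExec k j tk)
  show ?thesis
  proof (cases tk)
    case (TWrite b v)
    then show ?thesis using lact_W[of n t w p k j b v st st' outs] assms AExec
      by (auto simp: we_ws we_pend PIo_def)
  next
    case (TRead sn)
    then show ?thesis using lact_R[of n t w p k j sn st st' outs] assms AExec
      by (auto simp: PIo_def)
  qed
next
  case (ARecv k j m)
  then show ?thesis using assms by (auto simp: PIo_def split: msg.splits)
qed (use assms in \<open>auto simp: Let_def PIo_def split: if_splits opstate.splits\<close>)




lemma src_eff:
  assumes "lact n t w p a st = Some (st', outs)" "d \<noteq> p" "d \<in> {1..n}" "\<forall>q. ws st q \<le> ws st p"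
  shows "(sentv st' p d = sentv st p d \<and> outW outs d = {}) \<or>
         (sentv st' p d = sentv st p d + 1 \<and> (\<exists>v. outW outs d = {((sentv st p d + 1) mod 2, v)}))"
proof (cases a)
  case (AInvW x)
  have hd: "ws st d \<le> ws st p" using assms(4) by blast
  show ?thesis
  proof (cases "ws st d = ws st p")
    case True
    then show ?thesis using assms AInvW by (auto simp: Let_def sentv_def outW_def split: if_splits)
  next
    case False
    then show ?thesis using assms(1,2,3) AInvW hd by (auto simp: Let_def sentv_def outW_def split: if_splits)
  qed
next
  case (AExec k j tk)
  show ?thesis
  proof (cases tk)
    case (TWrite b v)
    have hd: "ws st d \<le> ws st p" using assms(4) by blast
    have hj: "ws st j \<le> ws st p" using assms(4) by blast
    have L: "(k,j,TWrite b v) \<in> pend st \<and> b = (ws st j + 1) mod 2 \<and>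
         st' = fst (write_exec n p j v (st\<lparr>pend := pend st - {(k,j,TWrite b v)}\<rparr>)) \<and>
         outs = snd (write_exec n p j v (st\<lparr>pend := pend st - {(k,j,TWrite b v)}\<rparr>))"
      using lact_W[of n t w p k j b v st st' outs] assms AExec TWrite by blast
    show ?thesis
    proof (cases "j = d")
      case True
      then show ?thesis using L hd assms(2,3)
        by (simp add: we_ws we_out sentv_def outW_def)
    next
      case False
      show ?thesis
      proof (cases "j = p")
        case True
        then show ?thesis using L hd assms(2,3)
          apply (simp add: we_ws we_out sentv_def outW_def)
          apply (cases "ws st d = ws st p")
          apply auto
          done
      next
        case False2: False
        then show ?thesis using L hd hj assms(2,3) False
          apply (simp add: we_ws we_out sentv_def outW_def)
          apply (cases "ws st d = ws st p"; cases "ws st j = ws st p"; cases "ws st j + 1 < ws st p")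
          apply auto
          done
      qed
    qed
  next
    case (TRead sn)
    then show ?thesis using lact_R[of n t w p k j sn st st' outs] assms AExec
      by (auto simp: sentv_def outW_def)
  qed
next
  case (ARecv k j m)
  then show ?thesis using assms by (auto simp: sentv_def outW_def split: msg.splits)
qed (use assms in \<open>auto simp: Let_def sentv_def outW_def split: if_splits opstate.splits\<close>)




definition NI :: "'v cfg \<Rightarrow> nat \<Rightarrow> nat \<Rightarrow> (nat \<times> nat \<times> 'v) set" where
  "NI c s d = {(k,b,v). (k,s,d,MWrite b v) \<in> net c}"

definition PI :: "'v cfg \<Rightarrow> nat \<Rightarrow> nat \<Rightarrow> (nat \<times> nat \<times> 'v) set" where
  "PI c s d = PIo (lst c d) s"

definition sent :: "'v cfg \<Rightarrow> nat \<Rightarrow> nat \<Rightarrow> nat" where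
  "sent c s d = sentv (lst c s) s d"

definition Rv :: "'v cfg \<Rightarrow> nat \<Rightarrow> nat \<Rightarrow> nat" where
  "Rv c s d = ws (lst c d) s"

lemma NI_upd:
  "NI \<lparr>lst = L, net = (net c - consumed p a) \<union> {(k, p, d', m) |d' m. (d', m) \<in> outs}\<rparr> s d =
   {x \<in> NI c s d. (fst x, s, d, MWrite (fst (snd x)) (snd (snd x))) \<notin> consumed p a} \<union>
   (if p = s then {(k',b,v). k' = k \<and> (b,v) \<in> outW outs d} else {})"
  by (auto simp: NI_def outW_def)

lemma consumed_other: "q \<noteq> p \<Longrightarrow> (k, s, q, m) \<notin> consumed p a"
  by (auto simp: consumed_def split: act.splits)

lemma dir_step:
  assumes st: "step n t w k c e c'" and sd: "s \<noteq> d" "s \<in> {1..n}" "d \<in> {1..n}"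
    and nc: "\<not> crashed (lst c' s)" "\<not> crashed (lst c' d)"
    and L: "\<forall>p q. ws (lst c p) q \<le> ws (lst c p) p"
  shows "(NI c' s d = NI c s d \<and> PI c' s d = PI c s d \<and> Rv c' s d = Rv c s d \<and> sent c' s d = sent c s d) \<or>
         (\<exists>v. NI c' s d = insert (k, (sent c s d + 1) mod 2, v) (NI c s d) \<and> PI c' s d = PI c s d
              \<and> Rv c' s d = Rv c s d \<and> sent c' s d = sent c s d + 1) \<or>
         (\<exists>x\<in>NI c s d. NI c' s d = NI c s d - {x} \<and> PI c' s d = insert x (PI c s d)
              \<and> Rv c' s d = Rv c s d \<and> sent c' s d = sent c s d) \<or>
         (\<exists>x\<in>PI c s d. fst (snd x) = (Rv c s d + 1) mod 2 \<and> NI c' s d = NI c s d \<and> PI c' s d = PI c s d - {x}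
              \<and> Rv c' s d = Rv c s d + 1 \<and> sent c' s d = sent c s d)"
proof (cases e)
  case Stutter
  then show ?thesis using st by (simp add: step_def)
next
  case (Crash p)
  then have "p \<noteq> s" "p \<noteq> d" using st nc by (auto simp: step_def)
  then show ?thesis using st Crash by (auto simp: step_def NI_def PI_def Rv_def sent_def)
next
  case (CrashDo p a S)
  then obtain s' outs where c': "lact n t w p a (lst c p) = Some (s', outs)" "S \<subseteq> outs"
     "c' = \<lparr>lst = (lst c)(p := s'\<lparr>crashed := True\<rparr>),
                   net = (net c - consumed p a) \<union> {(k, p, d, m) | d m. (d, m) \<in> S}\<rparr>"
    using st by (auto simp: step_def)
  then have "p \<noteq> s" "p \<noteq> d" using nc by auto
  then show ?thesis using c' by (simp add: NI_upd PI_def Rv_def sent_def consumed_other)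
next
  case (Do p a)
  then obtain s' outs where c': "enabled n t w c p a" "lact n t w p a (lst c p) = Some (s', outs)"
     "c' = \<lparr>lst = (lst c)(p := s'),
                   net = (net c - consumed p a) \<union> {(k, p, d, m) | d m. (d, m) \<in> outs}\<rparr>"
    using st by (auto simp: step_def)
  consider "p = s" | "p = d" | "p \<noteq> s \<and> p \<noteq> d" by blast
  then show ?thesis
  proof cases
    case 1
    have e: "(sentv s' p d = sentv (lst c p) p d \<and> outW outs d = {}) \<or>
         (sentv s' p d = sentv (lst c p) p d + 1 \<and> (\<exists>v. outW outs d = {((sentv (lst c p) p d + 1) mod 2, v)}))"
      using sd L 1 by (intro src_eff[OF c'(2)]) auto
    then show ?thesis
    proof
      assume h: "sentv s' p d = sentv (lst c p) p d \<and> outW outs d = {}"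
      show ?thesis apply (rule disjI1) using h 1 sd c'(3)
        by (auto simp add: NI_upd PI_def Rv_def sent_def consumed_other)
    next
      assume h: "sentv s' p d = sentv (lst c p) p d + 1 \<and> (\<exists>v. outW outs d = {((sentv (lst c p) p d + 1) mod 2, v)})"
      then obtain v where v: "outW outs d = {((sentv (lst c p) p d + 1) mod 2, v)}" by blast
      show ?thesis apply (rule disjI2, rule disjI1, rule exI[of _ v]) using h v 1 sd c'(3)
        by (auto simp: NI_upd PI_def Rv_def sent_def consumed_other)
    qed
  next
    case 2
    have e: "(ws s' s = ws (lst c p) s \<and> PIo s' s = PIo (lst c p) s \<and> (\<forall>k b v. a \<noteq> ARecv k s (MWrite b v))) \<or>
   (\<exists>k b v. a = ARecv k s (MWrite b v) \<and> ws s' s = ws (lst c p) s \<and> PIo s' s = insert (k,b,v) (PIo (lst c p) s)) \<or>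
   (\<exists>k b v. a = AExec k s (TWrite b v) \<and> (k,b,v) \<in> PIo (lst c p) s \<and> b = (ws (lst c p) s + 1) mod 2
      \<and> ws s' s = ws (lst c p) s + 1 \<and> PIo s' s = PIo (lst c p) s - {(k,b,v)})"
      using dst_eff[OF c'(2)] sd 2 by blast
    then show ?thesis
    proof (elim disjE exE conjE)
      assume h: "ws s' s = ws (lst c p) s" "PIo s' s = PIo (lst c p) s" "\<forall>k b v. a \<noteq> ARecv k s (MWrite b v)"
      have "\<forall>x. (fst x, s, d, MWrite (fst (snd x)) (snd (snd x))) \<notin> consumed p a"
        using h(3) by (auto simp: consumed_def split: act.splits)
      then show ?thesis apply (intro disjI1) using h 2 sd c'(3)
        by (simp add: NI_upd PI_def Rv_def sent_def)
    next
      fix k0 b v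
      assume h: "a = ARecv k0 s (MWrite b v)" "ws s' s = ws (lst c p) s" "PIo s' s = insert (k0, b, v) (PIo (lst c p) s)"
      have inN: "(k0,b,v) \<in> NI c s d" using c'(1) h(1) 2 by (simp add: enabled_def recv_ok_def NI_def)
      have nn: "NI c' s d = NI c s d - {(k0,b,v)}" using h 2 sd c'(3)
        apply (simp add: NI_upd) by (auto simp: consumed_def)
      have "PI c' s d = insert (k0,b,v) (PI c s d) \<and> Rv c' s d = Rv c s d \<and> sent c' s d = sent c s d"
        using h 2 sd c'(3) by (auto simp: PI_def Rv_def sent_def)
      then show ?thesis using nn inN by blast
    next
      fix k0 b v
      assume h: "a = AExec k0 s (TWrite b v)" "(k0, b, v) \<in> PIo (lst c p) s" "b = (ws (lst c p) s + 1) mod 2"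
        "ws s' s = ws (lst c p) s + 1" "PIo s' s = PIo (lst c p) s - {(k0, b, v)}"
      have nn: "NI c' s d = NI c s d" using h 2 sd c'(3)
        apply (simp add: NI_upd) by (auto simp: consumed_def)
      have "PI c' s d = PI c s d - {(k0,b,v)} \<and> Rv c' s d = Rv c s d + 1 \<and> sent c' s d = sent c s d
          \<and> (k0,b,v) \<in> PI c s d \<and> fst (snd (k0,b,v)) = (Rv c s d + 1) mod 2"
        using h 2 sd c'(3) by (auto simp: PI_def Rv_def sent_def)
      then show ?thesis using nn by blast
    qed
  next
    case 3
    then show ?thesis using c'(3) by (simp add: NI_upd PI_def Rv_def sent_def consumed_other)
  qed
qed




definition Dabs :: "nat \<Rightarrow> nat \<Rightarrow> (nat \<times> nat \<times> 'v) set \<Rightarrow> (nat \<times> nat \<times> 'v) set \<Rightarrow> bool" where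
 "Dabs R sn N P = (R \<le> sn \<and> sn \<le> R + 2 \<and> N \<inter> P = {} \<and>
   (\<forall>x\<in>N\<union>P. \<exists>m. R < m \<and> m \<le> sn \<and> fst (snd x) = m mod 2) \<and>
   (\<forall>m. R < m \<and> m \<le> sn \<longrightarrow> (\<exists>x\<in>N\<union>P. fst (snd x) = m mod 2)) \<and>
   (\<forall>x\<in>N\<union>P. \<forall>y\<in>N\<union>P. fst (snd x) = fst (snd y) \<longrightarrow> x = y))"

lemma Dabs_C2:
  assumes D: "Dabs R sn N P" and b: "sn + 1 \<le> R + 2"
  shows "Dabs R (sn+1) (insert (k,(sn+1) mod 2,v) N) P"
proof -
  have old: "\<forall>x\<in>N\<union>P. fst (snd x) = sn mod 2 \<and> sn = R + 1"
  proof
    fix x assume "x \<in> N \<union> P"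
    then obtain m where "R < m" "m \<le> sn" "fst (snd x) = m mod 2" using D unfolding Dabs_def by blast
    then show "fst (snd x) = sn mod 2 \<and> sn = R + 1" using b by (subgoal_tac "m = sn") auto
  qed
  have neq: "(sn + 1) mod 2 \<noteq> sn mod 2" by presburger
  have nin: "(k,(sn+1) mod 2,v) \<notin> N \<union> P"
  proof
    assume "(k,(sn+1) mod 2,v) \<in> N \<union> P"
    then have "fst (snd (k,(sn+1) mod 2,v)) = sn mod 2" using old by blast
    then show False using neq by simp
  qed
  show ?thesis unfolding Dabs_def
  proof (intro conjI)
    show "R \<le> sn + 1" using D by (simp add: Dabs_def)
    show "sn + 1 \<le> R + 2" by fact
    show "insert (k, (sn + 1) mod 2, v) N \<inter> P = {}" using D nin by (auto simp: Dabs_def)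
    show "\<forall>x\<in>insert (k, (sn + 1) mod 2, v) N \<union> P. \<exists>m>R. m \<le> sn + 1 \<and> fst (snd x) = m mod 2"
    proof
      fix x assume x: "x \<in> insert (k, (sn + 1) mod 2, v) N \<union> P"
      show "\<exists>m>R. m \<le> sn + 1 \<and> fst (snd x) = m mod 2"
      proof (cases "x = (k, (sn + 1) mod 2, v)")
        case True
        have "R < sn + 1" using D by (simp add: Dabs_def)
        then show ?thesis using True by auto
      next
        case False
        then have "x \<in> N \<union> P" using x by auto
        then obtain m where "R < m" "m \<le> sn" "fst (snd x) = m mod 2" using D unfolding Dabs_def by blast
        then show ?thesis by (intro exI[of _ m]) auto
      qed
    qed
    show "\<forall>m. R < m \<and> m \<le> sn + 1 \<longrightarrow> (\<exists>x\<in>insert (k, (sn + 1) mod 2, v) N \<union> P. fst (snd x) = m mod 2)"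
    proof (intro allI impI)
      fix m assume m: "R < m \<and> m \<le> sn + 1"
      show "\<exists>x\<in>insert (k, (sn + 1) mod 2, v) N \<union> P. fst (snd x) = m mod 2"
      proof (cases "m = sn + 1")
        case True then show ?thesis by auto
      next
        case False then have "R < m \<and> m \<le> sn" using m by auto
        then obtain x where "x \<in> N \<union> P" "fst (snd x) = m mod 2" using D unfolding Dabs_def by blast
        then show ?thesis by auto
      qed
    qed
    show "\<forall>x\<in>insert (k, (sn + 1) mod 2, v) N \<union> P. \<forall>y\<in>insert (k, (sn + 1) mod 2, v) N \<union> P. fst (snd x) = fst (snd y) \<longrightarrow> x = y"
    proof (intro ballI impI)
      fix x y assume x: "x \<in> insert (k, (sn + 1) mod 2, v) N \<union> P" and y: "y \<in> insert (k, (sn + 1) mod 2, v) N \<union> P"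
        and e: "fst (snd x) = fst (snd y)"
      have inj: "\<forall>x\<in>N\<union>P. \<forall>y\<in>N\<union>P. fst (snd x) = fst (snd y) \<longrightarrow> x = y" using D unfolding Dabs_def by blast
      consider "x = (k, (sn + 1) mod 2, v)" | "x \<in> N \<union> P" using x by blast
      then show "x = y"
      proof cases
        case 1
        consider "y = (k, (sn + 1) mod 2, v)" | "y \<in> N \<union> P" using y by blast
        then show ?thesis
        proof cases
          case 2 then have "fst (snd y) = sn mod 2" using old by blast
          then show ?thesis using 1 e neq by simp
        qed (use 1 in simp)
      next
        case 2
        then have px: "fst (snd x) = sn mod 2" using old by blast
        consider "y = (k, (sn + 1) mod 2, v)" | "y \<in> N \<union> P" using y by blast
        then show ?thesis
        proof cases
          case 1 then show ?thesis using px e neq by simp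
        next
          case 3: 2 then show ?thesis using inj 2 e by blast
        qed
      qed
    qed
  qed
qed

lemma Dabs_C3:
  assumes D: "Dabs R sn N P" and x: "x \<in> N"
  shows "Dabs R sn (N - {x}) (insert x P)"
proof -
  have e: "(N - {x}) \<union> insert x P = N \<union> P" using x by auto
  show ?thesis using D unfolding Dabs_def e by auto
qed

lemma Dabs_C4:
  assumes D: "Dabs R sn N P" and x: "x \<in> P" and px: "fst (snd x) = (R + 1) mod 2"
  shows "Dabs (R+1) sn N (P - {x})"
proof -
  have xN: "x \<notin> N" using D x by (auto simp: Dabs_def)
  have e: "N \<union> (P - {x}) = (N \<union> P) - {x}" using xN by auto
  obtain m0 where "R < m0" "m0 \<le> sn" using D x by (auto simp: Dabs_def)
  then have s1: "R + 1 \<le> sn" by auto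
  have ne: "\<And>y. y \<in> N \<union> P \<Longrightarrow> y \<noteq> x \<Longrightarrow> fst (snd y) \<noteq> (R+1) mod 2"
    using D x px unfolding Dabs_def by (metis UnCI)
  have neq: "(R + 2) mod 2 \<noteq> (R + 1) mod 2" by presburger
  show ?thesis unfolding Dabs_def e
  proof (intro conjI)
    show "R + 1 \<le> sn" by fact
    show "sn \<le> R + 1 + 2" using D by (simp add: Dabs_def)
    show "N \<inter> (P - {x}) = {}" using D by (auto simp: Dabs_def)
    show "\<forall>y\<in>N \<union> P - {x}. \<exists>m>R + 1. m \<le> sn \<and> fst (snd y) = m mod 2"
    proof
      fix y assume y: "y \<in> N \<union> P - {x}"
      then obtain m where m: "R < m" "m \<le> sn" "fst (snd y) = m mod 2" using D unfolding Dabs_def by blast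
      have "m \<noteq> R + 1" using ne[of y] y m by auto
      then show "\<exists>m>R + 1. m \<le> sn \<and> fst (snd y) = m mod 2" using m by (intro exI[of _ m]) auto
    qed
    show "\<forall>m. R + 1 < m \<and> m \<le> sn \<longrightarrow> (\<exists>y\<in>N \<union> P - {x}. fst (snd y) = m mod 2)"
    proof (intro allI impI)
      fix m assume m: "R + 1 < m \<and> m \<le> sn"
      then have m2: "m = R + 2" using D by (auto simp: Dabs_def)
      have "R < m \<and> m \<le> sn" using m by simp
      then obtain y where y: "y \<in> N \<union> P" "fst (snd y) = m mod 2" using D unfolding Dabs_def by blast
      have "y \<noteq> x" using y px m2 neq by auto
      then show "\<exists>y\<in>N \<union> P - {x}. fst (snd y) = m mod 2" using y by auto
    qed
    show "\<forall>a\<in>N \<union> P - {x}. \<forall>b\<in>N \<union> P - {x}. fst (snd a) = fst (snd b) \<longrightarrow> a = b"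
      using D unfolding Dabs_def by blast
  qed
qed




definition D :: "'v cfg \<Rightarrow> nat \<Rightarrow> nat \<Rightarrow> bool" where
  "D c s d = Dabs (Rv c s d) (sent c s d) (NI c s d) (PI c s d)"

definition TR :: "nat \<Rightarrow> 'v cfg \<Rightarrow> 'v cfg \<Rightarrow> nat \<Rightarrow> nat \<Rightarrow> bool" where
  "TR k c c' s d = ((NI c' s d = NI c s d \<and> PI c' s d = PI c s d \<and> Rv c' s d = Rv c s d \<and> sent c' s d = sent c s d) \<or>
         (\<exists>v. NI c' s d = insert (k, (sent c s d + 1) mod 2, v) (NI c s d) \<and> PI c' s d = PI c s d
              \<and> Rv c' s d = Rv c s d \<and> sent c' s d = sent c s d + 1) \<or>
         (\<exists>x\<in>NI c s d. NI c' s d = NI c s d - {x} \<and> PI c' s d = insert x (PI c s d)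
              \<and> Rv c' s d = Rv c s d \<and> sent c' s d = sent c s d) \<or>
         (\<exists>x\<in>PI c s d. fst (snd x) = (Rv c s d + 1) mod 2 \<and> NI c' s d = NI c s d \<and> PI c' s d = PI c s d - {x}
              \<and> Rv c' s d = Rv c s d + 1 \<and> sent c' s d = sent c s d))"

lemma D_Rle:
  assumes "D c s d" "TR k c c' s d"
  shows "Rv c' s d \<le> sent c' s d"
proof -
  have D: "Dabs (Rv c s d) (sent c s d) (NI c s d) (PI c s d)" using assms(1) by (simp add: D_def)
  show ?thesis using assms(2) unfolding TR_def
  proof (elim disjE exE conjE bexE)
    fix x assume "x \<in> PI c s d" "Rv c' s d = Rv c s d + 1" "sent c' s d = sent c s d"
    then obtain m where "Rv c s d < m" "m \<le> sent c s d" using D unfolding Dabs_def by blast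
    then show ?thesis using \<open>Rv c' s d = Rv c s d + 1\<close> \<open>sent c' s d = sent c s d\<close> by simp
  qed (use D in \<open>simp_all add: Dabs_def\<close>)
qed

lemma D_step:
  assumes "D c s d" "TR k c c' s d" "sent c' s d \<le> Rv c' s d + 2"
  shows "D c' s d"
proof -
  have D: "Dabs (Rv c s d) (sent c s d) (NI c s d) (PI c s d)" using assms(1) by (simp add: D_def)
  show ?thesis using assms(2) unfolding TR_def
  proof (elim disjE exE conjE bexE)
    assume "NI c' s d = NI c s d" "PI c' s d = PI c s d" "Rv c' s d = Rv c s d" "sent c' s d = sent c s d"
    then show ?thesis using D by (simp add: D_def)
  next
    fix v assume h: "NI c' s d = insert (k, (sent c s d + 1) mod 2, v) (NI c s d)" "PI c' s d = PI c s d"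
              "Rv c' s d = Rv c s d" "sent c' s d = sent c s d + 1"
    show ?thesis unfolding D_def h using Dabs_C2[OF D, of k v] assms(3) h by simp
  next
    fix x assume h: "x \<in> NI c s d" "NI c' s d = NI c s d - {x}" "PI c' s d = insert x (PI c s d)"
              "Rv c' s d = Rv c s d" "sent c' s d = sent c s d"
    show ?thesis unfolding D_def h(2-) using Dabs_C3[OF D h(1)] by simp
  next
    fix x assume h: "x \<in> PI c s d" "fst (snd x) = (Rv c s d + 1) mod 2" "NI c' s d = NI c s d" "PI c' s d = PI c s d - {x}"
              "Rv c' s d = Rv c s d + 1" "sent c' s d = sent c s d"
    show ?thesis unfolding D_def h(3-) using Dabs_C4[OF D h(1,2)] by simp
  qed
qed

definition Inv :: "'v cfg \<Rightarrow> nat \<Rightarrow> nat \<Rightarrow> bool" where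
  "Inv c i j = ((\<forall>p q. ws (lst c p) q \<le> ws (lst c p) p) \<and> D c i j \<and> D c j i)"

lemma Inv_init: "Inv (init_cfg v0) i j"
  by (auto simp: Inv_def init_cfg_def init_lstate_def D_def Dabs_def Rv_def sent_def sentv_def NI_def PI_def PIo_def)

lemma L_step:
  assumes "step n t w k c e c'" "\<forall>p q. ws (lst c p) q \<le> ws (lst c p) p"
  shows "\<forall>p q. ws (lst c' p) q \<le> ws (lst c' p) p"
proof (cases e)
  case (Do p a)
  then obtain s' outs where c': "lact n t w p a (lst c p) = Some (s', outs)"
     "c' = \<lparr>lst = (lst c)(p := s'),
                   net = (net c - consumed p a) \<union> {(k, p, d, m) | d m. (d, m) \<in> outs}\<rparr>"
    using assms(1) by (auto simp: step_def)
  have "\<forall>q. ws s' q \<le> ws s' p" using L_pres[OF c'(1)] assms(2) by blast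
  then show ?thesis using c'(2) assms(2) by auto
next
  case (CrashDo p a S)
  then obtain s' outs where c': "lact n t w p a (lst c p) = Some (s', outs)"
     "c' = \<lparr>lst = (lst c)(p := s'\<lparr>crashed := True\<rparr>),
                   net = (net c - consumed p a) \<union> {(k, p, d, m) | d m. (d, m) \<in> S}\<rparr>"
    using assms(1) by (auto simp: step_def)
  have "\<forall>q. ws s' q \<le> ws s' p" using L_pres[OF c'(1)] assms(2) by blast
  then show ?thesis using c'(2) assms(2) by auto
qed (use assms in \<open>auto simp: step_def\<close>)

lemma Inv_step:
  assumes I: "Inv c i j" and st: "step n t w k c e c'" and ij: "i \<noteq> j" "i \<in> {1..n}" "j \<in> {1..n}"
    and nc: "\<not> crashed (lst c' i)" "\<not> crashed (lst c' j)"
  shows "Inv c' i j"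
proof -
  have L: "\<forall>p q. ws (lst c p) q \<le> ws (lst c p) p" using I by (simp add: Inv_def)
  have L': "\<forall>p q. ws (lst c' p) q \<le> ws (lst c' p) p" using L_step[OF st L] .
  have T1: "TR k c c' i j" unfolding TR_def using dir_step[OF st ij nc L] .
  have T2: "TR k c c' j i" unfolding TR_def using dir_step[OF st ij(1)[symmetric] ij(3,2) nc(2,1) L] .
  have R1: "Rv c' i j \<le> sent c' i j" using D_Rle[OF _ T1] I by (simp add: Inv_def)
  have R2: "Rv c' j i \<le> sent c' j i" using D_Rle[OF _ T2] I by (simp add: Inv_def)
  have B1: "sent c' i j \<le> Rv c' i j + 2" using R2 by (auto simp: sent_def sentv_def Rv_def)
  have B2: "sent c' j i \<le> Rv c' j i + 2" using R1 by (auto simp: sent_def sentv_def Rv_def)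
  show ?thesis using D_step[OF _ T1 B1] D_step[OF _ T2 B2] I L' by (simp add: Inv_def)
qed




lemma ws_step_mono:
  assumes "step n t w k c e c'" "\<forall>p q. ws (lst c p) q \<le> ws (lst c p) p"
  shows "ws (lst c p) q \<le> ws (lst c' p) q"
proof (cases e)
  case (Do p' a)
  then obtain s' outs where c': "lact n t w p' a (lst c p') = Some (s', outs)"
     "c' = \<lparr>lst = (lst c)(p' := s'),
                   net = (net c - consumed p' a) \<union> {(k, p', d, m) | d m. (d, m) \<in> outs}\<rparr>"
    using assms(1) by (auto simp: step_def)
  have "ws (lst c p') q \<le> ws s' q" using mono_pres[OF c'(1)] assms(2) by blast
  then show ?thesis using c'(2) by auto
next
  case (CrashDo p' a S)
  then obtain s' outs where c': "lact n t w p' a (lst c p') = Some (s', outs)"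
     "c' = \<lparr>lst = (lst c)(p' := s'\<lparr>crashed := True\<rparr>),
                   net = (net c - consumed p' a) \<union> {(k, p', d, m) | d m. (d, m) \<in> S}\<rparr>"
    using assms(1) by (auto simp: step_def)
  have "ws (lst c p') q \<le> ws s' q" using mono_pres[OF c'(1)] assms(2) by blast
  then show ?thesis using c'(2) by auto
qed (use assms in \<open>auto simp: step_def\<close>)

lemma bounded_mono_const:
  fixes f :: "nat \<Rightarrow> nat"
  assumes "\<And>k. f k \<le> f (Suc k)" "\<And>k. f k \<le> B"
  shows "\<exists>K a. \<forall>k\<ge>K. f k = a"
proof -
  have fin: "finite (range f)" using assms(2) by (meson finite_atMost finite_subset image_subsetI atMost_iff)
  obtain K where K: "f K = Max (range f)" using Max_in[OF fin] by auto
  have "\<forall>k\<ge>K. f k = Max (range f)"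
  proof (intro allI impI)
    fix k assume "K \<le> k"
    then have "f K \<le> f k" using lift_Suc_mono_le[of f, OF assms(1)] by blast
    moreover have "f k \<le> Max (range f)" using fin by simp
    ultimately show "f k = Max (range f)" using K by simp
  qed
  then show ?thesis by blast
qed

lemma persist:
  assumes TR: "\<And>k. TR k (r k) (r (Suc k)) s d"
    and Rc: "\<And>k. k \<ge> K \<Longrightarrow> Rv (r k) s d = a"
    and x: "x \<in> NI (r k0) s d \<union> PI (r k0) s d" and k0: "k0 \<ge> K"
  shows "k \<ge> k0 \<Longrightarrow> x \<in> NI (r k) s d \<union> PI (r k) s d"
proof (induction k rule: dec_induct)
  case base then show ?case using x by simp
next
  case (step m)
  have "Rv (r (Suc m)) s d = Rv (r m) s d" using Rc step(1) k0 by simp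
  then show ?case using TR[of m] step(3) unfolding TR_def by auto
qed

lemma persistP:
  assumes TR: "\<And>k. TR k (r k) (r (Suc k)) s d"
    and Rc: "\<And>k. k \<ge> K \<Longrightarrow> Rv (r k) s d = a"
    and x: "x \<in> PI (r k0) s d" and k0: "k0 \<ge> K"
  shows "k \<ge> k0 \<Longrightarrow> x \<in> PI (r k) s d"
proof (induction k rule: dec_induct)
  case base then show ?case using x by simp
next
  case (step m)
  have "Rv (r (Suc m)) s d = Rv (r m) s d" using Rc step(1) k0 by simp
  then show ?case using TR[of m] step(3) unfolding TR_def by auto
qed

lemma progress:
  assumes TR: "\<And>k. TR k (r k) (r (Suc k)) s d"
    and DD: "\<And>k. D (r k) s d"
    and Rc: "\<And>k. k \<ge> K \<Longrightarrow> Rv (r k) s d = a"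
    and fair: "fair n t w r" and dn: "d \<in> {1..n}" and cd: "correct r d"
    and kK: "k \<ge> K"
  shows "sent (r k) s d = a"
proof (rule ccontr)
  assume ne: "sent (r k) s d \<noteq> a"
  have Dk: "Dabs a (sent (r k) s d) (NI (r k) s d) (PI (r k) s d)" using DD[of k] Rc[OF kK] by (simp add: D_def)
  then have "a < a + 1 \<and> a + 1 \<le> sent (r k) s d" using ne unfolding Dabs_def by auto
  then obtain x where x: "x \<in> NI (r k) s d \<union> PI (r k) s d" "fst (snd x) = (a + 1) mod 2"
    using Dk unfolding Dabs_def by blast
  obtain k1 b v where xe: "x = (k1, b, v)" by (cases x) auto
  have noP: False if P: "x \<in> PI (r k2) s d" "k2 \<ge> K" for k2
  proof -
    have "\<forall>k'\<ge>k2. enabled n t w (r k') d (AExec k1 s (TWrite b v))"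
    proof (intro allI impI)
      fix k' assume "k2 \<le> k'"
      then have xP: "x \<in> PI (r k') s d" using persistP[OF TR Rc P(1) P(2)] by blast
      have R: "ws (lst (r k') d) s = a" using Rc[of k'] \<open>k2 \<le> k'\<close> P(2) by (simp add: Rv_def)
      show "enabled n t w (r k') d (AExec k1 s (TWrite b v))"
        using xP R x(2) xe dn cd unfolding enabled_def PI_def PIo_def correct_def recv_ok_def
        by (auto simp: Let_def)
    qed
    then show False using fair unfolding fair_def is_inv_def by fastforce
  qed
  have allO: "\<forall>k'\<ge>k. x \<in> NI (r k') s d \<union> PI (r k') s d" using persist[OF TR Rc x(1) kK] by blast
  have "\<forall>k'\<ge>k. x \<in> NI (r k') s d"
  proof (intro allI impI)
    fix k' assume "k \<le> k'"
    then have "x \<in> NI (r k') s d \<or> x \<in> PI (r k') s d" using allO by blast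
    then show "x \<in> NI (r k') s d" using noP[of k'] \<open>k \<le> k'\<close> kK by auto
  qed
  then have "\<forall>k'\<ge>k. enabled n t w (r k') d (ARecv k1 s (MWrite b v))"
    using xe dn cd unfolding enabled_def NI_def correct_def recv_ok_def by auto
  then show False using fair unfolding fair_def is_inv_def by fastforce
qed




theorem lemma6:
  fixes n t w :: nat and v0 :: 'v and r :: "nat \<Rightarrow> 'v cfg" and ev :: "nat \<Rightarrow> 'v event"
  assumes "2 * t < n"
    and "w \<in> {1..n}"
    and "is_run n t w v0 r ev"
    and "card {p \<in> {1..n}. \<not> correct r p} \<le> t"
    and "i \<in> {1..n}" and "j \<in> {1..n}"
    and "correct r i" and "correct r j"
    and "ws (lst (r k) i) i = x"
  shows "\<exists>k'. \<forall>k''\<ge>k'. ws (lst (r k'') i) j \<ge> x"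
proof -
  have r0: "r 0 = init_cfg v0" and st: "\<And>k. step n t w k (r k) (ev k) (r (Suc k))" and fair: "fair n t w r"
    using assms(3) by (auto simp: is_run_def)
  have L: "\<forall>p q. ws (lst (r m) p) q \<le> ws (lst (r m) p) p" for m
  proof (induction m)
    case 0 then show ?case by (simp add: r0 init_cfg_def init_lstate_def)
  next
    case (Suc m) then show ?case using L_step[OF st] by blast
  qed
  have mono: "ws (lst (r m) p) q \<le> ws (lst (r m') p) q" if "m \<le> m'" for m m' p q
    using lift_Suc_mono_le[of "\<lambda>m. ws (lst (r m) p) q", OF ws_step_mono[OF st L] that] .
  show ?thesis
  proof (cases "i = j")
    case True
    then show ?thesis using mono[of k _ i i] assms(9) by blast
  next
    case ij: False
    have nci: "\<not> crashed (lst (r m) i)" and ncj: "\<not> crashed (lst (r m) j)" for m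
      using assms(7,8) by (auto simp: correct_def)
    have I: "Inv (r m) i j" for m
    proof (induction m)
      case 0 then show ?case using Inv_init r0 by simp
    next
      case (Suc m) then show ?case using Inv_step[OF _ st ij assms(5,6) nci ncj] by blast
    qed
    have T1: "TR m (r m) (r (Suc m)) i j" for m
      unfolding TR_def using dir_step[OF st ij assms(5,6) nci ncj L] .
    have T2: "TR m (r m) (r (Suc m)) j i" for m
      unfolding TR_def using dir_step[OF st ij[symmetric] assms(6,5) ncj nci L] .
    show ?thesis
    proof (rule ccontr)
      assume H: "\<not> ?thesis"
      have lt: "ws (lst (r m) i) j < x" for m
      proof (rule ccontr)
        assume "\<not> ws (lst (r m) i) j < x"
        then have "\<forall>k''\<ge>m. ws (lst (r k'') i) j \<ge> x" using mono[of m _ i j] by force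
        then show False using H by blast
      qed
      have Rij_mono: "Rv (r m) j i \<le> Rv (r (Suc m)) j i" for m
        using mono[of m "Suc m" i j] by (simp add: Rv_def)
      obtain K1 a where Ka: "\<forall>m\<ge>K1. Rv (r m) j i = a"
        using bounded_mono_const[of "\<lambda>m. Rv (r m) j i" x] Rij_mono lt
        by (metis Rv_def less_imp_le)
      have Rji_b: "Rv (r m) i j \<le> x" for m
      proof -
        have "Rv (r m) i j \<le> sent (r m) i j" using I[of m] by (simp add: Inv_def D_def Dabs_def)
        also have "\<dots> \<le> ws (lst (r m) i) j + 1" by (simp add: sent_def sentv_def)
        finally show ?thesis using lt[of m] by simp
      qed
      have Rji_mono: "Rv (r m) i j \<le> Rv (r (Suc m)) i j" for m
        using mono[of m "Suc m" j i] by (simp add: Rv_def)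
      obtain K2 b where Kb: "\<forall>m\<ge>K2. Rv (r m) i j = b"
        using bounded_mono_const[of "\<lambda>m. Rv (r m) i j" x] Rji_mono Rji_b by blast
      define K where "K = max k (max K1 K2)"
      have s1: "sent (r K) j i = a"
        by (rule progress[OF T2 _ _ fair assms(5,7), of K1 a]) (use I Ka K_def in \<open>auto simp: Inv_def\<close>)
      have s2: "sent (r K) i j = b"
        by (rule progress[OF T1 _ _ fair assms(6,8), of K2 b]) (use I Kb K_def in \<open>auto simp: Inv_def\<close>)
      have aK: "ws (lst (r K) i) j = a" using Ka K_def by (simp add: Rv_def)
      have bK: "ws (lst (r K) j) i = b" using Kb K_def by (simp add: Rv_def)
      have Si: "ws (lst (r K) i) i \<ge> x" using mono[of k K i i] assms(9) K_def by simp
      have "a < x" using lt[of K] aK by simp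
      then have "b = a + 1" using s2 Si aK by (simp add: sent_def sentv_def)
      then have "ws (lst (r K) j) j = a" using s1 bK by (simp add: sent_def sentv_def)
      moreover have "ws (lst (r K) j) i \<le> ws (lst (r K) j) j" using L by blast
      ultimately show False using bK \<open>b = a + 1\<close> by simp
    qed
  qed
qed


end
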